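(* Let $G\in\mathscr G_d$ and let $\mu$ be a nonzero finite Borel measure on $S^{n-1}$ not concentrated on any closed hemisphere. If $\{K_i\}_{i\in\mathbb N}\subseteq\mathscr K^n_{(o)}$ satisfies $$\sup_{i\in\mathbb N}\int_{S^{n-1}}G(\xi,\rho_{K_i^*}(\xi))\,d\mu(\xi)<+\infty,$$ then there is a finite constant $R$ with $K_i\subseteq RB^n$ for all $i\in\mathbb N$.
   Context: $S^{n-1}$ unit sphere, $B^n$ unit ball of $\mathbb R^n$, $n\ge2$. $\mathscr K^n_{(o)}$: compact convex sets with the origin in their interior; $\rho_K(x)=\max\{t\ge0:tx\in K\}$, $K^*=\{x:x\cdot y\le1\ \forall y\in K\}$. $\mathscr G_d$ is the set of $G:S^{n-1}\times(0,\infty)\to(0,\infty)$ such that $G$ and $G_t=\partial G/\partial t$ are continuous, and for each $u\in S^{n-1}$: $G_t(u,\cdot)<0$ on $(0,\infty)$, $\lim_{t\to0^+}G(u,t)=\infty$, $\lim_{t\to\infty}G(u,t)=0$. $\mu$ is not concentrated on any closed hemisphere if $\int_{S^{n-1}}(u\cdot\xi)_+\,d\mu(\xi)>0$ for all $u\in S^{n-1}$. *)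

theory Defs
  imports "HOL-Analysis.Analysis"
begin

definition radial_fun :: "'a::euclidean_space set \<Rightarrow> 'a \<Rightarrow> real" where
  "radial_fun K x = Sup {t. t \<ge> 0 \<and> t *\<^sub>R x \<in> K}"

definition polar_body :: "'a::euclidean_space set \<Rightarrow> 'a set" where
  "polar_body K = {x. \<forall>y\<in>K. x \<bullet> y \<le> 1}"

definition convex_bodies_o :: "'a::euclidean_space set set" where
  "convex_bodies_o = {K. compact K \<and> convex K \<and> 0 \<in> interior K}"

definition class_Gd :: "('a::euclidean_space \<Rightarrow> real \<Rightarrow> real) set" where
  "class_Gd = {G.
     (\<forall>u\<in>sphere 0 1. \<forall>t>0. G u t > 0) \<and>
     continuous_on (sphere 0 1 \<times> {0<..}) (\<lambda>(u,t). G u t) \<and>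
     (\<exists>Gt. (\<forall>u\<in>sphere 0 1. \<forall>t>0. ((G u) has_real_derivative Gt u t) (at t)) \<and>
           continuous_on (sphere 0 1 \<times> {0<..}) (\<lambda>(u,t). Gt u t) \<and>
           (\<forall>u\<in>sphere 0 1. \<forall>t>0. Gt u t < 0)) \<and>
     (\<forall>u\<in>sphere 0 1. filterlim (G u) at_top (at_right 0)) \<and>
     (\<forall>u\<in>sphere 0 1. ((G u) \<longlongrightarrow> 0) at_top)}"

end

theory Submission
  imports Defs
begin

lemma rho_bound:
  fixes K :: "'a::euclidean_space set"
  assumes "compact K" "x \<in> K" "x \<bullet> \<xi> > 0" "norm \<xi> = 1"
  shows "0 < radial_fun (polar_body K) \<xi> \<and> radial_fun (polar_body K) \<xi> \<le> 1 / (x \<bullet> \<xi>)"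
proof -
  let ?S = "{t. t \<ge> 0 \<and> t *\<^sub>R \<xi> \<in> polar_body K}"
  have ub: "t \<le> 1 / (x \<bullet> \<xi>)" if "t \<in> ?S" for t
  proof -
    from that assms(2) have "(t *\<^sub>R \<xi>) \<bullet> x \<le> 1" by (auto simp: polar_body_def)
    hence "t * (x \<bullet> \<xi>) \<le> 1" by (simp add: inner_commute)
    thus ?thesis using assms(3) by (simp add: field_simps)
  qed
  obtain r where r: "r > 0" "\<forall>y\<in>K. norm y \<le> r"
    using compact_imp_bounded[OF assms(1)] bounded_pos by metis
  have "1 / r \<in> ?S"
  proof -
    have "(1/r) *\<^sub>R \<xi> \<bullet> y \<le> 1" if "y \<in> K" for y
    proof -
      have "(1/r) *\<^sub>R \<xi> \<bullet> y \<le> norm ((1/r) *\<^sub>R \<xi>) * norm y" by (rule norm_cauchy_schwarz)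
      also have "\<dots> = norm y / r" using r assms(4) by simp
      also have "\<dots> \<le> 1" using r that by simp
      finally show ?thesis .
    qed
    thus ?thesis using r by (auto simp: polar_body_def)
  qed
  moreover have bdd: "bdd_above ?S" unfolding bdd_above_def using ub by blast
  ultimately have "1/r \<le> Sup ?S" by (rule cSup_upper)
  hence "0 < Sup ?S" using r by (smt (verit) divide_pos_pos)
  moreover have "Sup ?S \<le> 1 / (x \<bullet> \<xi>)"
    using \<open>1/r \<in> ?S\<close> ub by (intro cSup_least) blast+
  ultimately show ?thesis by (simp add: radial_fun_def)
qed

lemma G_mono:
  assumes G: "G \<in> class_Gd" and u: "u \<in> sphere 0 1" and ab: "0 < a" "a \<le> b"
  shows "G u b \<le> G u a"
proof (cases "a = b")
  case False
  from G obtain Gt where Gt: "\<forall>u\<in>sphere 0 1. \<forall>t>0. ((G u) has_real_derivative Gt u t) (at t)"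
     "\<forall>u\<in>sphere 0 1. \<forall>t>0. Gt u t < 0" unfolding class_Gd_def by blast
  have "G u b < G u a"
    apply (rule DERIV_neg_imp_decreasing[where f="G u"])
    using False ab apply simp
    using Gt u ab by (metis less_le_trans)
  thus ?thesis by simp
qed simp

lemma G_cont:
  assumes G: "G \<in> class_Gd" and t: "t > 0"
  shows "continuous_on (sphere 0 1) (\<lambda>\<xi>. G \<xi> t)"
proof -
  have c: "continuous_on (sphere 0 1 \<times> {0<..}) (\<lambda>(u,t). G u t)" using G unfolding class_Gd_def by blast
  have "continuous_on (sphere 0 1) ((\<lambda>(u,t). G u t) \<circ> (\<lambda>\<xi>. (\<xi>, t)))"
    apply (rule continuous_on_compose)
     apply (intro continuous_intros)
    apply (rule continuous_on_subset[OF c]) using t by auto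
  thus ?thesis by (simp add: o_def)
qed

theorem lemma5p2:
  fixes G :: "'a::euclidean_space \<Rightarrow> real \<Rightarrow> real"
    and \<mu> :: "'a measure"
    and K :: "nat \<Rightarrow> 'a set"
  assumes dim: "DIM('a) \<ge> 2"
    and G: "G \<in> class_Gd"
    and mu_sets: "sets \<mu> = sets (restrict_space borel (sphere (0::'a) 1))"
    and mu_fin: "finite_measure \<mu>"
    and mu_nz: "emeasure \<mu> (space \<mu>) \<noteq> 0"
    and mu_nc: "\<forall>u\<in>sphere (0::'a) 1. (\<integral>\<xi>. max 0 (u \<bullet> \<xi>) \<partial>\<mu>) > 0"
    and K: "\<forall>i. K i \<in> convex_bodies_o"
    and bnd: "(SUP i. \<integral>\<^sup>+ \<xi>. ennreal (G \<xi> (radial_fun (polar_body (K i)) \<xi>)) \<partial>\<mu>) < \<infinity>"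
  shows "\<exists>R::real. \<forall>i. K i \<subseteq> cball 0 R"
proof (rule ccontr)
  assume nb: "\<not> (\<exists>R::real. \<forall>i. K i \<subseteq> cball 0 R)"
  interpret fm: finite_measure \<mu> by (rule mu_fin)
  have sp: "space \<mu> = sphere 0 1"
    using sets_eq_imp_space_eq[OF mu_sets] by (simp add: space_restrict_space)
  have measI: "f \<in> borel_measurable \<mu>" if "continuous_on (sphere 0 1) f" for f :: "'a \<Rightarrow> real"
    using borel_measurable_continuous_on_restrict[OF that] measurable_cong_sets[OF mu_sets refl] by blast
  define c where "c = measure \<mu> (space \<mu>)"
  have c_pos: "c > 0"
    using mu_nz fm.emeasure_eq_measure c_def by (metis ennreal_0 measure_nonneg order_le_less)
  have "\<forall>n::nat. \<exists>i x. x \<in> K i \<and> norm x > real n"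
  proof
    fix n :: nat
    from nb obtain i where "\<not> K i \<subseteq> cball 0 (real n)" by blast
    thus "\<exists>i x. x \<in> K i \<and> norm x > real n" by (meson not_le subset_iff mem_cball_0)
  qed
  then obtain I X where IX: "\<And>n. X n \<in> K (I n)" "\<And>n. norm (X n) > real n" by metis
  define U where "U n = X n /\<^sub>R norm (X n)" for n
  have Xpos: "norm (X n) > 0" for n using IX(2)[of n] by linarith
  have U_sph: "U n \<in> sphere 0 1" for n using Xpos[of n] by (simp add: U_def)
  have XU: "X n = norm (X n) *\<^sub>R U n" for n using Xpos[of n] by (simp add: U_def)
  obtain u r where u: "u \<in> sphere 0 1" and r: "strict_mono r" and lim: "(U \<circ> r) \<longlonglongrightarrow> u"
    using compact_sphere[of "0::'a" 1] U_sph unfolding compact_def by metis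
  define m where "m = (\<integral>\<xi>. max 0 (u \<bullet> \<xi>) \<partial>\<mu>)"
  have m_pos: "m > 0" using mu_nc u m_def by blast
  define \<delta> where "\<delta> = m / (2 * c)"
  have \<delta>_pos: "\<delta> > 0" using m_pos c_pos by (simp add: \<delta>_def)
  define A where "A = {\<xi> \<in> space \<mu>. \<delta> \<le> u \<bullet> \<xi>}"
  have inner_meas: "(\<lambda>\<xi>. u \<bullet> \<xi>) \<in> borel_measurable \<mu>"
    by (intro measI continuous_intros)
  have A_sets: "A \<in> sets \<mu>" unfolding A_def
    by (rule borel_measurable_le[OF borel_measurable_const inner_meas])
  have inner_le1: "\<bar>u \<bullet> \<xi>\<bar> \<le> 1" if "\<xi> \<in> sphere 0 1" for \<xi>
    using Cauchy_Schwarz_ineq2[of u \<xi>] u that by simp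
  have "m \<le> (\<integral>\<xi>. indicator A \<xi> + \<delta> \<partial>\<mu>)"
    unfolding m_def
  proof (rule integral_mono)
    show "integrable \<mu> (\<lambda>\<xi>. max 0 (u \<bullet> \<xi>))"
      apply (rule fm.integrable_const_bound[where B=1])
      using inner_le1 sp apply (auto intro!: AE_I2 simp: abs_le_iff)[1]
      by (intro measI continuous_intros)
    show "integrable \<mu> (\<lambda>\<xi>. indicator A \<xi> + \<delta>)"
      by (intro Bochner_Integration.integrable_add integrable_real_indicator A_sets fm.integrable_const)
         (simp add: fm.emeasure_real less_top[symmetric])
    fix \<xi> assume "\<xi> \<in> space \<mu>"
    thus "max 0 (u \<bullet> \<xi>) \<le> indicator A \<xi> + \<delta>"
      using inner_le1[of \<xi>] sp \<delta>_pos by (auto simp: A_def indicator_def)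
  qed
  also have "\<dots> = measure \<mu> A + \<delta> * c"
    using A_sets sets.sets_into_space[OF A_sets]
    by (subst Bochner_Integration.integral_add)
       (auto simp: c_def integral_indicator Int_absorb2 fm.emeasure_real less_top[symmetric]
             intro!: integrable_real_indicator)
  finally have "measure \<mu> A \<ge> m / 2" using c_pos by (simp add: \<delta>_def)
  hence A_pos: "emeasure \<mu> A \<noteq> 0"
    using m_pos fm.emeasure_eq_measure by (metis ennreal_eq_0_iff not_le half_gt_zero_iff order_le_less_trans measure_nonneg)
  define t where "t k = 1 / real (Suc k)" for k
  have t_pos: "t k > 0" for k by (simp add: t_def)
  have t_mono: "t l \<le> t k" if "k \<le> l" for k l using that by (simp add: t_def frac_le)
  have t_lim: "filterlim t (at_right 0) sequentially"
  proof (rule tendsto_imp_filterlim_at_right)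
    have "t = (\<lambda>n. inverse (real (Suc n)))" by (simp add: t_def fun_eq_iff inverse_eq_divide)
    thus "t \<longlonglongrightarrow> 0" using LIMSEQ_inverse_real_of_nat by simp
    show "\<forall>\<^sub>F x in sequentially. 0 < t x" using t_pos by simp
  qed
  define f where "f k \<xi> = ennreal (G \<xi> (t k)) * indicator A \<xi>" for k \<xi>
  have A_sph: "\<xi> \<in> sphere 0 1" if "\<xi> \<in> A" for \<xi> using that sp by (simp add: A_def)
  have f_inc: "incseq f"
  proof (rule incseq_SucI, rule le_funI)
    fix k \<xi>
    show "f k \<xi> \<le> f (Suc k) \<xi>"
      using G_mono[OF G A_sph t_pos t_mono[of k "Suc k"]]
      by (cases "\<xi> \<in> A") (auto simp: f_def intro: ennreal_leI)
  qed
  have f_meas: "f k \<in> borel_measurable \<mu>" for k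
    unfolding f_def
    by (intro borel_measurable_times_ennreal measurable_compose[OF measI[OF G_cont[OF G t_pos]] measurable_ennreal]
          borel_measurable_indicator A_sets)
  have f_sup: "(SUP k. f k \<xi>) = top * indicator A \<xi>" for \<xi>
  proof (cases "\<xi> \<in> A")
    case True
    have lim\<xi>: "filterlim (\<lambda>k. G \<xi> (t k)) at_top sequentially"
      using G A_sph[OF True] unfolding class_Gd_def
      by (auto intro: filterlim_compose[OF _ t_lim])
    have "(SUP k. f k \<xi>) = top"
      unfolding SUP_eq_top_iff
    proof (intro allI impI)
      fix y :: ennreal assume "y < top"
      then obtain z where z: "z \<ge> 0" "y = ennreal z" using less_top_ennreal by blast
      from lim\<xi> have "eventually (\<lambda>k. z + 1 \<le> G \<xi> (t k)) sequentially"
        by (simp add: filterlim_at_top)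
      then obtain k where "z + 1 \<le> G \<xi> (t k)" by (metis eventually_sequentially order_refl)
      hence "y < f k \<xi>" using z True by (simp add: f_def ennreal_lessI)
      thus "\<exists>k\<in>UNIV. y < f k \<xi>" by blast
    qed
    thus ?thesis using True by simp
  next
    case False
    thus ?thesis by (simp add: f_def)
  qed
  have "(SUP k. integral\<^sup>N \<mu> (f k)) = (\<integral>\<^sup>+\<xi>. top * indicator A \<xi> \<partial>\<mu>)"
    using nn_integral_monotone_convergence_SUP[OF f_inc f_meas] f_sup by simp
  also have "\<dots> = top * emeasure \<mu> A" by (rule nn_integral_cmult_indicator[OF A_sets])
  also have "\<dots> = top" using A_pos by (simp add: ennreal_top_mult)
  finally have "(SUP k. integral\<^sup>N \<mu> (f k)) = top" .
  define S where "S = (SUP i. \<integral>\<^sup>+ \<xi>. ennreal (G \<xi> (radial_fun (polar_body (K i)) \<xi>)) \<partial>\<mu>)"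
  have "S < top" using bnd by (simp add: S_def)
  then obtain k0 where k0: "S < integral\<^sup>N \<mu> (f k0)"
    using \<open>(SUP k. integral\<^sup>N \<mu> (f k)) = top\<close> unfolding SUP_eq_top_iff by blast
  from lim \<delta>_pos obtain N1 where N1: "\<And>n. n \<ge> N1 \<Longrightarrow> dist ((U \<circ> r) n) u < \<delta> / 2"
    unfolding lim_sequentially by (meson half_gt_zero)
  define n where "n = max N1 (nat \<lceil>2 * real (Suc k0) / \<delta>\<rceil>)"
  have dn: "dist (U (r n)) u < \<delta> / 2" using N1[of n] by (simp add: n_def)
  have "real n \<ge> 2 * real (Suc k0) / \<delta>" unfolding n_def by linarith
  moreover have "real (r n) \<ge> real n" using seq_suble[OF r, of n] by simp
  ultimately have Xbig: "norm (X (r n)) \<ge> 2 * real (Suc k0) / \<delta>" using IX(2)[of "r n"] by linarith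
  define i where "i = I (r n)"
  define x where "x = X (r n)"
  have xK: "x \<in> K i" using IX(1) by (simp add: x_def i_def)
  have Kc: "compact (K i)" using K by (simp add: convex_bodies_o_def)
  have "f k0 \<xi> \<le> ennreal (G \<xi> (radial_fun (polar_body (K i)) \<xi>))" for \<xi>
  proof (cases "\<xi> \<in> A")
    case True
    have \<xi>s: "\<xi> \<in> sphere 0 1" using A_sph[OF True] .
    have ud: "u \<bullet> \<xi> \<ge> \<delta>" using True by (simp add: A_def)
    have "\<bar>(U (r n) - u) \<bullet> \<xi>\<bar> \<le> norm (U (r n) - u)"
      using Cauchy_Schwarz_ineq2[of "U (r n) - u" \<xi>] \<xi>s by simp
    also have "\<dots> < \<delta> / 2" using dn by (simp add: dist_norm)
    finally have "U (r n) \<bullet> \<xi> > \<delta> / 2" using ud unfolding inner_diff_left by linarith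
    hence "norm x * (\<delta> / 2) \<le> norm x * (U (r n) \<bullet> \<xi>)"
      using Xpos[of "r n"] by (simp add: x_def)
    also have "\<dots> = x \<bullet> \<xi>" using XU[of "r n"] by (metis inner_scaleR_left x_def)
    finally have "x \<bullet> \<xi> \<ge> norm x * (\<delta> / 2)" .
    moreover have "norm x * (\<delta> / 2) \<ge> real (Suc k0)"
      using Xbig \<delta>_pos by (simp add: x_def field_simps)
    ultimately have xx: "x \<bullet> \<xi> \<ge> real (Suc k0)" by linarith
    have rb: "0 < radial_fun (polar_body (K i)) \<xi> \<and> radial_fun (polar_body (K i)) \<xi> \<le> 1 / (x \<bullet> \<xi>)"
      using rho_bound[OF Kc xK _ ] xx \<xi>s by simp
    have "1 / (x \<bullet> \<xi>) \<le> t k0" unfolding t_def using xx by (simp add: frac_le)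
    hence "G \<xi> (t k0) \<le> G \<xi> (radial_fun (polar_body (K i)) \<xi>)"
      using G_mono[OF G \<xi>s] rb by (meson order_trans)
    thus ?thesis using True by (simp add: f_def ennreal_leI)
  qed (simp add: f_def)
  hence "integral\<^sup>N \<mu> (f k0) \<le> (\<integral>\<^sup>+ \<xi>. ennreal (G \<xi> (radial_fun (polar_body (K i)) \<xi>)) \<partial>\<mu>)"
    by (intro nn_integral_mono) auto
  also have "\<dots> \<le> S" unfolding S_def by (rule SUP_upper) simp
  finally show False using k0 by simp
qed
end
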